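(* Let $n\ge 2$ and regard $\ell_{T(A_n)}$ as a random variable on $A_n$ with the uniform distribution. Then $$E[\ell_{T(A_n)}]=n-H_n-\tfrac12,\qquad \mathrm{Var}[\ell_{T(A_n)}]=H_n-H_{n,2}-\tfrac14.$$
   Context: $A_n$ is the alternating group on $\{1,\dots,n\}$, $T(A_n)=\{(1\,2)(i\,j)\mid 1\le i<j\le n\}$, and $\ell_{T(A_n)}(v)=\min\{r\ge 0\mid v=t_1\cdots t_r,\ t_i\in T(A_n)\}$. $E[s]=\frac{1}{|A_n|}\sum_{v\in A_n}s(v)$ and $\mathrm{Var}[s]=E[s^2]-E[s]^2$. $H_n=\sum_{i=1}^n \frac1i$ and $H_{n,2}=\sum_{i=1}^n\frac{1}{i^2}$. *)

theory Defs
  imports "HOL-Combinatorics.Combinatorics" "HOL-Analysis.Harmonic_Numbers"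
begin

definition alt_group :: "nat \<Rightarrow> (nat \<Rightarrow> nat) set" where
  "alt_group n = {p. p permutes {1..n} \<and> evenperm p}"

definition T_alt :: "nat \<Rightarrow> (nat \<Rightarrow> nat) set" where
  "T_alt n = {Transposition.transpose 1 2 \<circ> Transposition.transpose i j | i j. 1 \<le> i \<and> i < j \<and> j \<le> n}"

definition len_T :: "nat \<Rightarrow> (nat \<Rightarrow> nat) \<Rightarrow> nat" where
  "len_T n v = (LEAST r. \<exists>ts. length ts = r \<and> set ts \<subseteq> T_alt n \<and> v = foldr (\<circ>) ts id)"

definition E_alt :: "nat \<Rightarrow> ((nat \<Rightarrow> nat) \<Rightarrow> real) \<Rightarrow> real" where
  "E_alt n s = (1 / real (card (alt_group n))) * (\<Sum>v\<in>alt_group n. s v)"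

definition Var_alt :: "nat \<Rightarrow> ((nat \<Rightarrow> nat) \<Rightarrow> real) \<Rightarrow> real" where
  "Var_alt n s = E_alt n (\<lambda>v. (s v)^2) - (E_alt n s)^2"

definition H2 :: "nat \<Rightarrow> real" where
  "H2 n = (\<Sum>i=1..n. 1 / (real i)^2)"

end

theory Submission
  imports Defs
begin


abbreviation tr :: "nat \<Rightarrow> nat \<Rightarrow> nat \<Rightarrow> nat" where "tr \<equiv> Transposition.transpose"

fun gl :: "nat \<Rightarrow> (nat \<Rightarrow> nat) \<Rightarrow> nat" where
  "gl 0 p = 0"
| "gl (Suc n) p = (if n < 2 then 0 else gl n (tr (Suc n) (p (Suc n)) \<circ> p) + (if p (Suc n) = Suc n then 0 else 1))"

lemma gl_step: "2 \<le> n \<Longrightarrow> gl (Suc n) p = gl n (tr (Suc n) (p (Suc n)) \<circ> p) + (if p (Suc n) = Suc n then 0 else 1)"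
  by simp

declare gl.simps(2)[simp del]

lemma gl_small: "n \<le> 2 \<Longrightarrow> gl n p = 0"
  by (cases n) (auto simp: gl.simps)

lemma tr_conj:
  assumes "a \<noteq> i" "a \<noteq> j"
  shows "tr a (tr i j k) \<circ> tr i j = tr i j \<circ> tr a k"
  using assms by (auto simp: fun_eq_iff Transposition.transpose_def)

lemma tr_conj2:
  assumes "m \<noteq> k" "m \<noteq> N" "k \<noteq> N"
  shows "tr N k \<circ> tr m N = tr m k \<circ> tr N k"
  using assms by (auto simp: fun_eq_iff Transposition.transpose_def)

lemma gl_id: "gl n id = 0"
proof (induction n)
  case (Suc n) then show ?case by (cases "n < 2") (auto simp: gl.simps)
qed simp

lemma gl_L1: "gl n (tr 1 2 \<circ> p) = gl n p"
proof (induction n arbitrary: p)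
  case 0 then show ?case by simp
next
  case (Suc n)
  show ?case
  proof (cases "n < 2")
    case True then show ?thesis by (simp add: gl_small)
  next
    case False
    define k where "k = p (Suc n)"
    have ne: "Suc n \<noteq> 1" "Suc n \<noteq> 2" using False by auto
    have e1: "(tr 1 2 \<circ> p) (Suc n) = tr 1 2 k" by (simp add: k_def)
    have e2: "tr (Suc n) (tr 1 2 k) \<circ> (tr 1 2 \<circ> p) = tr 1 2 \<circ> (tr (Suc n) k \<circ> p)"
      using tr_conj[OF ne, of k] by (metis comp_assoc)
    have e3: "(tr 1 2 k = Suc n) = (k = Suc n)"
      using ne by (auto simp: Transposition.transpose_def)
    have "gl (Suc n) (tr 1 2 \<circ> p) = gl n (tr (Suc n) ((tr 1 2 \<circ> p) (Suc n)) \<circ> (tr 1 2 \<circ> p)) + (if (tr 1 2 \<circ> p) (Suc n) = Suc n then 0 else 1)"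
      using False by (intro gl_step) auto
    also have "\<dots> = gl n (tr 1 2 \<circ> (tr (Suc n) k \<circ> p)) + (if k = Suc n then 0 else 1)"
      by (simp only: e1 e2 e3)
    also have "\<dots> = gl n (tr (Suc n) k \<circ> p) + (if k = Suc n then 0 else 1)"
      by (simp only: Suc.IH)
    also have "\<dots> = gl (Suc n) p" using False by (simp add: gl_step k_def)
    finally show ?thesis .
  qed
qed

lemma gl_L2: "gl n (tr i j \<circ> p) \<le> gl n p + 1"
proof (induction n arbitrary: i j p)
  case 0 then show ?case by simp
next
  case (Suc n)
  show ?case
  proof (cases "n < 2")
    case True then show ?thesis by (simp add: gl_small)
  next
    case False
    define N where "N = Suc n"
    define k where "k = p N"
    have st: "gl N q = gl n (tr N (q N) \<circ> q) + (if q N = N then 0 else 1)" for q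
      using False gl_step[of n q] by (simp add: N_def)
    have gp: "gl N p = gl n (tr N k \<circ> p) + (if k = N then 0 else 1)"
      using st[of p] by (simp add: k_def)
    show ?thesis
    proof (cases "i = j")
      case True then show ?thesis by simp
    next
      case ij: False
      show ?thesis
      proof (cases "N \<noteq> i \<and> N \<noteq> j")
        case True
        have e1: "(tr i j \<circ> p) N = tr i j k" by (simp add: k_def)
        have e2: "tr N (tr i j k) \<circ> (tr i j \<circ> p) = tr i j \<circ> (tr N k \<circ> p)"
          using tr_conj[of N i j k] True by (metis comp_assoc)
        have e3: "(tr i j k = N) = (k = N)"
          using True by (auto simp: Transposition.transpose_def)
        have "gl N (tr i j \<circ> p) = gl n (tr i j \<circ> (tr N k \<circ> p)) + (if k = N then 0 else 1)"
          using st[of "tr i j \<circ> p"] by (simp only: e1 e2 e3)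
        moreover have "gl n (tr i j \<circ> (tr N k \<circ> p)) \<le> gl n (tr N k \<circ> p) + 1" by (rule Suc.IH)
        ultimately have "gl N (tr i j \<circ> p) \<le> gl N p + 1" unfolding gp
          by (cases "k = N") (simp_all only: if_True if_False)
        then show ?thesis unfolding N_def .
      next
        case False2: False
        obtain m where m: "tr i j = tr m N" "m \<noteq> N"
          using False2 ij by (metis transpose_commute)
        have e1: "(tr m N \<circ> p) N = tr m N k" by (simp add: k_def)
        show ?thesis
        proof (cases "k = N")
          case True
          have a: "(tr m N \<circ> p) N = m" using True e1 by simp
          have b: "tr N m \<circ> (tr m N \<circ> p) = p"
            by (simp add: comp_assoc[symmetric] transpose_commute[of N m])
          have "gl N (tr m N \<circ> p) = gl n p + 1" using st[of "tr m N \<circ> p"] a b m(2) by simp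
          moreover have "gl N p = gl n p" using gp True by simp
          ultimately have "gl N (tr m N \<circ> p) \<le> gl N p + 1" by linarith
          then show ?thesis unfolding N_def m(1) .
        next
          case kN: False
          show ?thesis
          proof (cases "k = m")
            case True
            have a: "(tr m N \<circ> p) N = N" using True e1 by simp
            have "gl N (tr m N \<circ> p) = gl n (tr m N \<circ> p)" using st[of "tr m N \<circ> p"] a by simp
            moreover have "tr m N \<circ> p = tr N k \<circ> p" using True by (simp add: transpose_commute[of N m])
            ultimately have "gl N (tr m N \<circ> p) \<le> gl N p + 1" using gp kN by simp
            then show ?thesis unfolding N_def m(1) .
          next
            case km: False
            have a: "(tr m N \<circ> p) N = k" using km kN e1 by simp
            have b: "tr N k \<circ> (tr m N \<circ> p) = tr m k \<circ> (tr N k \<circ> p)"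
              using tr_conj2[of m k N] km kN m(2) by (metis comp_assoc)
            have "gl N (tr m N \<circ> p) = gl n (tr m k \<circ> (tr N k \<circ> p)) + 1"
              using st[of "tr m N \<circ> p"] a b kN by simp
            moreover have "gl n (tr m k \<circ> (tr N k \<circ> p)) \<le> gl n (tr N k \<circ> p) + 1" by (rule Suc.IH)
            ultimately have "gl N (tr m N \<circ> p) \<le> gl N p + 1" unfolding gp using kN by simp
            then show ?thesis unfolding N_def m(1) .
          qed
        qed
      qed
    qed
  qed
qed



lemma lower: "set ts \<subseteq> T_alt N \<Longrightarrow> gl N (foldr (\<circ>) ts id) \<le> length ts"
proof (induction ts)
  case Nil then show ?case using gl_id[of N] by (simp add: id_def)
next
  case (Cons t ts)
  then obtain i j where t: "t = tr 1 2 \<circ> tr i j" by (auto simp: T_alt_def)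
  have "gl N (foldr (\<circ>) (t # ts) id) = gl N (tr 1 2 \<circ> (tr i j \<circ> foldr (\<circ>) ts id))"
    by (simp add: t comp_assoc)
  also have "\<dots> = gl N (tr i j \<circ> foldr (\<circ>) ts id)" by (rule gl_L1)
  also have "\<dots> \<le> gl N (foldr (\<circ>) ts id) + 1" by (rule gl_L2)
  finally have a: "gl N (foldr (\<circ>) (t # ts) id) \<le> gl N (foldr (\<circ>) ts id) + 1" .
  have b: "gl N (foldr (\<circ>) ts id) \<le> length ts" by (rule Cons.IH) (use Cons.prems in simp)
  from a b show ?case unfolding length_Cons by linarith
qed

lemma T_alt_mono: "n \<le> N \<Longrightarrow> T_alt n \<subseteq> T_alt N"
  unfolding T_alt_def by fastforce

lemma upper:
  assumes "2 \<le> n" "v permutes {1..n}" "evenperm v"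
  shows "\<exists>ts. length ts = gl n v \<and> set ts \<subseteq> T_alt n \<and> v = foldr (\<circ>) ts id"
  using assms
proof (induction n arbitrary: v rule: nat_induct_at_least)
  case base
  have "{1..2::nat} = {1,2}" by auto
  then have "v = id \<or> v = tr 1 2" using base(1) permutes_doubleton_iff by metis
  moreover have "\<not> evenperm (tr 1 2)" by (simp add: evenperm_swap)
  ultimately have "v = id" using base(2) by auto
  then show ?case by (intro exI[of _ "[]"]) (simp add: gl_small)
next
  case (Suc n)
  note step = Suc.hyps(1) Suc.IH Suc.prems
  define N where "N = Suc n"
  define k where "k = v N"
  have ins: "{1..N} = insert N {1..n}" unfolding N_def by auto
  have vp: "v permutes insert N {1..n}" using step(3) ins N_def by simp
  have qp: "tr N k \<circ> v permutes {1..n}" using permutes_insert_lemma[OF vp] k_def by simp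
  have kin: "k \<in> {1..N}" using step(3) permutes_in_image[OF step(3), of N] N_def k_def by simp
  have gv: "gl N v = gl n (tr N k \<circ> v) + (if k = N then 0 else 1)"
    using gl_step[of n v] step(1) N_def k_def by simp
  show ?case
  proof (cases "k = N")
    case True
    then have "tr N k \<circ> v = v" by simp
    then have "v permutes {1..n}" using qp by simp
    from step(2)[OF this step(4)] obtain ts where
      ts: "length ts = gl n v" "set ts \<subseteq> T_alt n" "v = foldr (\<circ>) ts id" by blast
    have "length ts = gl N v" using gv True ts(1) by simp
    moreover have "set ts \<subseteq> T_alt N" using ts(2) T_alt_mono[of n N] N_def by auto
    ultimately show ?thesis using ts(3) N_def by blast
  next
    case False
    define q where "q = tr N k \<circ> v"
    have permv: "permutation v" using step(3) permutation_permutes by blast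
    have qodd: "\<not> evenperm q"
      unfolding q_def using evenperm_comp[OF permutation_swap_id permv] evenperm_swap[of N k] False step(4) by auto
    have qpm: "q permutes {1..n}" using qp q_def by simp
    define w where "w = tr 1 2 \<circ> q"
    have wp: "w permutes {1..n}" unfolding w_def
      using permutes_compose[OF qpm permutes_swap_id[of 1 "{1..n}" 2]] step(1) by auto
    have weven: "evenperm w" unfolding w_def
    proof -
      have "permutation q" using qpm permutation_permutes by blast
      then have "evenperm (tr 1 2 \<circ> q) = (evenperm (tr 1 2) = evenperm q)"
        by (rule evenperm_comp[OF permutation_swap_id])
      moreover have "\<not> evenperm (tr 1 2)" by (simp add: evenperm_swap)
      ultimately show "evenperm (tr 1 2 \<circ> q)" using qodd by simp
    qed
    from step(2)[OF wp weven] obtain ts where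
      ts: "length ts = gl n w" "set ts \<subseteq> T_alt n" "w = foldr (\<circ>) ts id" by blast
    define k' where "k' = tr 1 2 k"
    have kk: "tr 1 2 k' = k" unfolding k'_def by simp
    have k'in: "1 \<le> k'" "k' < N" using kin False step(1) unfolding k'_def N_def
      by (auto simp: Transposition.transpose_def)
    define t where "t = tr 1 2 \<circ> tr k' N"
    have tT: "t \<in> T_alt N" unfolding t_def T_alt_def using k'in by blast
    have ne: "N \<noteq> 1" "N \<noteq> 2" using step(1) N_def by auto
    have "v = tr N k \<circ> q" unfolding q_def by (simp add: comp_assoc[symmetric])
    also have "\<dots> = tr N k \<circ> tr 1 2 \<circ> w" unfolding w_def by (metis comp_assoc transpose_comp_involutory id_comp)
    also have "tr N k \<circ> tr 1 2 = tr 1 2 \<circ> tr N k'"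
      using tr_conj[OF ne, of k'] kk by simp
    also have "tr N k' = tr k' N" by (rule transpose_commute)
    finally have veq: "v = t \<circ> w" unfolding t_def by (simp add: fun_eq_iff)
    have "gl N v = gl n w + 1" using gv False gl_L1[of n q] unfolding q_def w_def by simp
    then have "length (t # ts) = gl N v" using ts(1) by simp
    moreover have "set (t # ts) \<subseteq> T_alt N" using ts(2) tT T_alt_mono[of n N] N_def by auto
    moreover have "v = foldr (\<circ>) (t # ts) id" using veq ts(3) by simp
    ultimately show ?thesis using N_def by metis
  qed
qed

lemma len_T_eq:
  assumes "2 \<le> n" "v \<in> alt_group n"
  shows "len_T n v = gl n v"
proof -
  have v: "v permutes {1..n}" "evenperm v" using assms(2) by (auto simp: alt_group_def)
  obtain ts where ts: "length ts = gl n v" "set ts \<subseteq> T_alt n" "v = foldr (\<circ>) ts id"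
    using upper[OF assms(1) v] by blast
  show ?thesis unfolding len_T_def
  proof (rule Least_equality)
    show "\<exists>ts. length ts = gl n v \<and> set ts \<subseteq> T_alt n \<and> v = foldr (\<circ>) ts id" using ts by blast
  next
    fix r assume "\<exists>ts. length ts = r \<and> set ts \<subseteq> T_alt n \<and> v = foldr (\<circ>) ts id"
    then show "gl n v \<le> r" using lower by blast
  qed
qed



definition SE :: "nat \<Rightarrow> (nat \<Rightarrow> real) \<Rightarrow> bool \<Rightarrow> real" where
  "SE n F e = (\<Sum>p | p permutes {1..n}. if evenperm p = e then F (gl n p) else 0)"

lemma SE_term:
  assumes "2 \<le> n" "q permutes {1..n}"
  shows "(if evenperm (tr (Suc n) b \<circ> q) = e then F (gl (Suc n) (tr (Suc n) b \<circ> q)) else 0)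
       = (if evenperm q = ((Suc n = b) = e) then F (gl n q + (if b = Suc n then 0 else 1)) else 0)"
proof -
  have qN: "q (Suc n) = Suc n" using permutes_not_in[OF assms(2)] by simp
  have perm: "permutation q" using assms(2) permutation_permutes by blast
  have ev: "evenperm (tr (Suc n) b \<circ> q) = ((Suc n = b) = evenperm q)"
    using evenperm_comp[OF permutation_swap_id perm, of "Suc n" b] evenperm_swap[of "Suc n" b] by simp
  have a: "(tr (Suc n) b \<circ> q) (Suc n) = b" using qN by simp
  have b: "tr (Suc n) b \<circ> (tr (Suc n) b \<circ> q) = q" by (metis comp_assoc transpose_comp_involutory id_comp)
  have gl: "gl (Suc n) (tr (Suc n) b \<circ> q) = gl n q + (if b = Suc n then 0 else 1)"
    using gl_step[OF assms(1), of "tr (Suc n) b \<circ> q"] a b by simp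
  show ?thesis unfolding ev gl by auto
qed

lemma SE_step:
  assumes "2 \<le> n"
  shows "SE (Suc n) F e = SE n F e + real n * SE n (\<lambda>x. F (Suc x)) (\<not> e)"
proof -
  have ins: "{1..Suc n} = insert (Suc n) {1..n}" by auto
  let ?P = "{p. p permutes {1..n}}"
  let ?f = "\<lambda>p. if evenperm p = e then F (gl (Suc n) p) else 0"
  have "SE (Suc n) F e = (\<Sum>b\<in>insert (Suc n) {1..n}. \<Sum>q\<in>?P. ?f (tr (Suc n) b \<circ> q))"
    unfolding SE_def ins by (rule sum_over_permutations_insert) auto
  also have "\<dots> = (\<Sum>q\<in>?P. ?f (tr (Suc n) (Suc n) \<circ> q)) + (\<Sum>b\<in>{1..n}. \<Sum>q\<in>?P. ?f (tr (Suc n) b \<circ> q))"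
    by (rule sum.insert) auto
  also have "(\<Sum>q\<in>?P. ?f (tr (Suc n) (Suc n) \<circ> q)) = SE n F e"
    unfolding SE_def
  proof (rule sum.cong)
    fix x assume "x \<in> ?P"
    then have xP: "x permutes {1..n}" by simp
    show "?f (tr (Suc n) (Suc n) \<circ> x) = (if evenperm x = e then F (gl n x) else 0)"
      unfolding SE_term[OF assms xP] by simp
  qed simp
  also have "(\<Sum>b\<in>{1..n}. \<Sum>q\<in>?P. ?f (tr (Suc n) b \<circ> q)) = (\<Sum>b\<in>{1..n}. SE n (\<lambda>x. F (Suc x)) (\<not> e))"
  proof (rule sum.cong)
    fix b assume "b \<in> {1..n}"
    then have bn: "b \<noteq> Suc n" by auto
    show "(\<Sum>q\<in>?P. ?f (tr (Suc n) b \<circ> q)) = SE n (\<lambda>x. F (Suc x)) (\<not> e)"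
      unfolding SE_def
    proof (rule sum.cong)
      fix x assume "x \<in> ?P"
      then have xP: "x permutes {1..n}" by simp
      show "?f (tr (Suc n) b \<circ> x) = (if evenperm x = (\<not> e) then F (Suc (gl n x)) else 0)"
        unfolding SE_term[OF assms xP] using bn by auto
    qed simp
  qed simp
  also have "\<dots> = real n * SE n (\<lambda>x. F (Suc x)) (\<not> e)" by simp
  finally show ?thesis .
qed

lemma SE_base: "SE 2 F e = F 0"
proof -
  have e: "{1..2::nat} = {1,2}" by auto
  have P: "{p. p permutes {1..2::nat}} = {id, tr 1 2}" unfolding e permutes_doubleton_iff by auto
  have ne: "id \<noteq> tr (1::nat) 2"
  proof
    assume "id = tr (1::nat) 2"
    then have "id (1::nat) = tr 1 2 1" by simp
    then show False by simp
  qed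
  have "\<not> evenperm (tr (1::nat) 2)" by (simp add: evenperm_swap)
  then show ?thesis unfolding SE_def P using ne by (cases e) (auto simp: gl_small)
qed

lemma SE_sym: "2 \<le> n \<Longrightarrow> SE n F True = SE n F False"
proof (induction n arbitrary: F rule: nat_induct_at_least)
  case base then show ?case by (simp add: SE_base)
next
  case (Suc n)
  have a: "SE (Suc n) F True = SE n F True + real n * SE n (\<lambda>x. F (Suc x)) False"
    using SE_step[OF Suc.hyps, of F True] by (simp only: not_True_eq_False)
  have b: "SE (Suc n) F False = SE n F False + real n * SE n (\<lambda>x. F (Suc x)) True"
    using SE_step[OF Suc.hyps, of F False] by (simp only: not_False_eq_True)
  show ?case unfolding a b Suc.IH[of F] Suc.IH[of "\<lambda>x. F (Suc x)"] ..
qed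

lemma SE_rec: "2 \<le> n \<Longrightarrow> SE (Suc n) F True = SE n F True + real n * SE n (\<lambda>x. F (Suc x)) True"
  using SE_step[of n F True] SE_sym[of n "\<lambda>x. F (Suc x)"] by (simp only: not_True_eq_False)

lemma SE_add: "SE n (\<lambda>x. f x + g x) e = SE n f e + SE n g e"
  unfolding SE_def sum.distrib[symmetric] by (rule sum.cong) auto

lemma SE_cmult: "SE n (\<lambda>x. c * f x) e = c * SE n f e"
  unfolding SE_def sum_distrib_left by (rule sum.cong) auto



lemma H2_Suc: "H2 (Suc n) = H2 n + 1 / (real (Suc n))^2"
  by (simp add: H2_def)

lemma H2_2: "H2 2 = 5/4"
proof -
  have "H2 0 = 0" by (simp add: H2_def)
  then have "H2 (Suc (Suc 0)) = 5/4" by (simp add: H2_Suc)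
  then show ?thesis by (simp add: numeral_2_eq_2)
qed

lemma harm_2: "harm 2 = (3/2::real)"
  by (simp add: harm_expand)

lemma ring_aux: "(a::real) * (b + d * z) = a * b + d * (a * z)"
  by (simp add: algebra_simps)

definition mm :: "nat \<Rightarrow> real" where "mm n = real n - harm n - 1/2"
definition VV :: "nat \<Rightarrow> real" where "VV n = harm n - H2 n - 1/4"

lemma closed:
  assumes "2 \<le> n"
  shows "SE n (\<lambda>_. 1) True > 0 \<and> SE n real True = SE n (\<lambda>_. 1) True * mm n
       \<and> SE n (\<lambda>x. (real x)^2) True = SE n (\<lambda>_. 1) True * (VV n + (mm n)^2)"
  using assms
proof (induction n rule: nat_induct_at_least)
  case base
  have "mm 2 = 0" unfolding mm_def harm_2 by simp
  moreover have "VV 2 = 0" unfolding VV_def harm_2 H2_2 by simp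
  ultimately show ?case by (simp add: SE_base)
next
  case (Suc n)
  define c where "c = SE n (\<lambda>_. 1) True"
  define S where "S = SE n real True"
  define Q where "Q = SE n (\<lambda>x. (real x)^2) True"
  have IH: "c > 0" "S = c * mm n" "Q = c * (VV n + (mm n)^2)" using Suc.IH unfolding c_def S_def Q_def by auto
  have c1: "SE (Suc n) (\<lambda>_. 1) True = c + real n * c"
    using SE_rec[OF Suc.hyps, of "\<lambda>_. 1"] unfolding c_def by simp
  have f1: "(\<lambda>x. real (Suc x)) = (\<lambda>x. real x + 1)" by auto
  have s1: "SE (Suc n) real True = S + real n * (S + c)"
    using SE_rec[OF Suc.hyps, of real] unfolding S_def c_def f1 SE_add by simp
  have f2: "(\<lambda>x. (real (Suc x))^2) = (\<lambda>x. (real x)^2 + (2 * real x + 1))"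
    by (auto simp: power2_eq_square algebra_simps)
  have q1: "SE (Suc n) (\<lambda>x. (real x)^2) True = Q + real n * (Q + (2 * S + c))"
    using SE_rec[OF Suc.hyps, of "\<lambda>x. (real x)^2"] unfolding Q_def S_def c_def f2 SE_add SE_cmult
    by simp
  have hm: "mm (Suc n) = mm n + real n / (real n + 1)"
    unfolding mm_def harm_Suc by (simp add: field_simps)
  have hv0: "VV (Suc n) = VV n + 1/real (Suc n) - 1/(real (Suc n))^2"
    unfolding VV_def harm_Suc H2_Suc by (simp add: inverse_eq_divide)
  have rs: "real (Suc n) = real n + 1" by simp
  have hv: "VV (Suc n) = VV n + 1/(real n + 1) - 1/(real n + 1)^2"
    using hv0 unfolding rs .
  have np: "real n + 1 > 0" by simp
  show ?case
  proof (intro conjI)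
    show "0 < SE (Suc n) (\<lambda>_. 1) True" unfolding c1 using IH(1) by (intro add_pos_nonneg) auto
    show "SE (Suc n) real True = SE (Suc n) (\<lambda>_. 1) True * mm (Suc n)"
      unfolding s1 c1 hm IH(2) using np by (simp add: field_simps)
    show "SE (Suc n) (\<lambda>x. (real x)^2) True = SE (Suc n) (\<lambda>_. 1) True * (VV (Suc n) + (mm (Suc n))^2)"
    proof -
      define x where "x = real n"
      have xp: "x + 1 > 0" unfolding x_def by simp
      have k: "VV n + 1/(x+1) - 1/(x+1)^2 + (mm n + x/(x+1))^2 = VV n + (mm n)^2 + (2*mm n + 1) * (x/(x+1))"
      proof -
        define y where "y = 1/(x+1)"
        have e: "y + x * y - 1 = 0" unfolding y_def using xp by (simp add: field_simps)
        have a: "x/(x+1) = x * y" "1/(x+1)^2 = y^2" unfolding y_def by (simp_all add: power2_eq_square)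
        have "VV n + y - y^2 + (mm n + x*y)^2 - (VV n + (mm n)^2 + (2*mm n + 1) * (x*y)) = y*(x-1)*(y + x * y - 1)"
          by (simp add: power2_eq_square algebra_simps)
        then show ?thesis unfolding a y_def[symmetric] e by simp
      qed
      have k2: "(c + x * c) * (x/(x+1)) = c * x" using xp by (simp add: field_simps)
      have "SE (Suc n) (\<lambda>_. 1) True * (VV (Suc n) + (mm (Suc n))^2)
          = (c + x * c) * (VV n + 1/(x+1) - 1/(x+1)^2 + (mm n + x/(x+1))^2)"
        unfolding c1 hv hm x_def by simp
      also have "\<dots> = (c + x * c) * (VV n + (mm n)^2 + (2*mm n + 1) * (x/(x+1)))"
        unfolding k ..
      also have "\<dots> = (c + x * c) * (VV n + (mm n)^2) + (2*mm n + 1) * ((c + x * c) * (x/(x+1)))"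
        by (rule ring_aux)
      also have "\<dots> = Q + x * (Q + (2 * S + c))"
        unfolding k2 IH(2,3) by (simp add: algebra_simps)
      finally show ?thesis unfolding q1 x_def by simp
    qed
  qed
qed

lemma sum_alt:
  assumes "2 \<le> n"
  shows "(\<Sum>v\<in>alt_group n. F (len_T n v)) = SE n F True"
proof -
  have A: "alt_group n = {p \<in> {p. p permutes {1..n}}. evenperm p}" by (auto simp: alt_group_def)
  have "(\<Sum>v\<in>alt_group n. F (len_T n v)) = (\<Sum>v\<in>alt_group n. F (gl n v))"
    using len_T_eq[OF assms] by simp
  also have "\<dots> = SE n F True" unfolding A SE_def
    by (subst sum.inter_filter) (auto intro: finite_permutations)
  finally show ?thesis .
qed

theorem theorem8p4:
  fixes n :: nat
  assumes "n \<ge> 2"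
  shows "E_alt n (\<lambda>v. real (len_T n v)) = real n - harm n - 1/2
       \<and> Var_alt n (\<lambda>v. real (len_T n v)) = harm n - H2 n - 1/4"
proof -
  define c where "c = SE n (\<lambda>_. 1) True"
  have cl: "c > 0" "SE n real True = c * mm n" "SE n (\<lambda>x. (real x)^2) True = c * (VV n + (mm n)^2)"
    using closed[OF assms] unfolding c_def by auto
  have card: "real (card (alt_group n)) = c"
    using sum_alt[OF assms, of "\<lambda>_. 1"] unfolding c_def by simp
  have E: "E_alt n (\<lambda>v. real (len_T n v)) = mm n"
    unfolding E_alt_def card sum_alt[OF assms, of real] cl(2) using cl(1) by simp
  have E2: "E_alt n (\<lambda>v. (real (len_T n v))^2) = VV n + (mm n)^2"
    unfolding E_alt_def card sum_alt[OF assms, of "\<lambda>x. (real x)^2"] cl(3) using cl(1) by simp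
  show ?thesis unfolding Var_alt_def E E2 mm_def VV_def by simp
qed

end
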